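(* Let $\mathbb{X},\mathbb{X}'\subseteq\mathbb{P}^{k-1}$ be arithmetically Gorenstein sets of $\mathbb{F}_q$-rational points with $\Delta\mathrm{HF}_{\mathbb{X}}=\Delta\mathrm{HF}_{\mathbb{X}'}$ equal to $1,k-1,k-1,1$ in degrees $0,1,2,3$ and $0$ in degrees $\ge4$. Let $L,L'\in P_1$ be linear forms with $L$ vanishing at no point of $\mathbb{X}$ and $L'$ vanishing at no point of $\mathbb{X}'$, and let $\varphi_{\mathbb{X}},\varphi_{\mathbb{X}'}\in\mathcal{D}_{-3}$ be homogeneous elements with $(I_{\mathbb{X}}+\langle L\rangle)^\perp=P\circ\varphi_{\mathbb{X}}$ and $(I_{\mathbb{X}'}+\langle L'\rangle)^\perp=P\circ\varphi_{\mathbb{X}'}$. Let $A\in\mathrm{GL}_k(\mathbb{F}_q)$ satisfy $\lambda_A(L)=L'$. If $\Lambda_A(\mathbb{X})=\mathbb{X}'$, then there is $c\in\mathbb{F}_q\setminus\{0\}$ with $\varphi_{\mathbb{X}'}(\lambda_A(g))=c\,\varphi_{\mathbb{X}}(g)$ for all $g\in P_3$.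
   Context: $P=\mathbb{F}_q[x_1,\dots,x_k]$ standard graded. For a set $\mathbb{X}$ of distinct $\mathbb{F}_q$-rational points of $\mathbb{P}^{k-1}$, $I_{\mathbb{X}}$ is its homogeneous vanishing ideal, $R=P/I_{\mathbb{X}}$, $\mathrm{HF}_{\mathbb{X}}(i)=\dim R_i$ ($0$ for $i<0$), $\Delta\mathrm{HF}_{\mathbb{X}}(i)=\mathrm{HF}_{\mathbb{X}}(i)-\mathrm{HF}_{\mathbb{X}}(i-1)$. $\mathbb{X}$ is arithmetically Gorenstein if $R$ is Gorenstein; then $P/(I_{\mathbb{X}}+\langle L\rangle)$ is an Artinian Gorenstein ring (here with top degree 3). $\mathcal{D}=\bigoplus_j\mathcal{D}_{-j}$, $\mathcal{D}_{-j}=\mathrm{Hom}_{\mathbb{F}_q}(P_j,\mathbb{F}_q)$, is a $P$-module via contraction $(f\circ\psi)(g)=\psi(fg)$; for an ideal $J$, $J^\perp=\{\psi:f\circ\psi=0\ \forall f\in J\}$ and $P\circ\varphi$ is the submodule generated by $\varphi$. For $A\in\mathrm{GL}_k(\mathbb{F}_q)$, $\Lambda_A(p)=Ap$ on $\mathbb{P}^{k-1}$ and $\lambda_A:P\to P$ is the graded automorphism $\lambda_A(f)(v)=f(A^{-1}v)$. *)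

theory Defs
  imports "HOL-Analysis.Analysis" "HOL-Library.Poly_Mapping"
begin

text \<open>Polynomial ring P = F[x_i | i :: 'n], k = CARD('n), F = 'a a finite field.
  Monomials are ('n =>0 nat), polynomials are monomial =>0 coefficient.\<close>

type_synonym ('a, 'n) pol = "('n \<Rightarrow>\<^sub>0 nat) \<Rightarrow>\<^sub>0 'a"

definition mdeg :: "('n::finite \<Rightarrow>\<^sub>0 nat) \<Rightarrow> nat" where
  "mdeg m = (\<Sum>i\<in>UNIV. Poly_Mapping.lookup m i)"

definition homog :: "nat \<Rightarrow> ('a::zero, 'n::finite) pol \<Rightarrow> bool" where
  "homog d f \<longleftrightarrow> (\<forall>m\<in>Poly_Mapping.keys f. mdeg m = d)"

definition Pd :: "nat \<Rightarrow> ('a::zero, 'n::finite) pol set" where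
  "Pd d = {f. homog d f}"

definition const :: "'a::zero \<Rightarrow> ('a, 'n) pol" where
  "const c = Poly_Mapping.single 0 c"

definition var :: "'n \<Rightarrow> ('a::{zero,one}, 'n) pol" where
  "var i = Poly_Mapping.single (Poly_Mapping.single i 1) 1"

definition pscale :: "'a::field \<Rightarrow> ('a, 'n) pol \<Rightarrow> ('a, 'n) pol" where
  "pscale c f = Poly_Mapping.map (\<lambda>x. c * x) f"

definition pdim :: "('a::field, 'n) pol set \<Rightarrow> nat" where
  "pdim V = vector_space.dim pscale V"

definition mval :: "('n::finite \<Rightarrow>\<^sub>0 nat) \<Rightarrow> 'a::comm_ring_1 ^ 'n \<Rightarrow> 'a" where
  "mval m v = (\<Prod>i\<in>UNIV. (v $ i) ^ Poly_Mapping.lookup m i)"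

definition peval :: "('a::comm_ring_1, 'n::finite) pol \<Rightarrow> 'a ^ 'n \<Rightarrow> 'a" where
  "peval f v = (\<Sum>m\<in>Poly_Mapping.keys f. Poly_Mapping.lookup f m * mval m v)"

definition hval :: "nat \<Rightarrow> ('a::comm_ring_1, 'n::finite) pol \<Rightarrow> 'a ^ 'n \<Rightarrow> 'a" where
  "hval d f v = (\<Sum>m\<in>{m\<in>Poly_Mapping.keys f. mdeg m = d}. Poly_Mapping.lookup f m * mval m v)"

text \<open>Projective points of P^{k-1}(F): the nonzero vectors on a line through 0.\<close>
definition proj_pt :: "'a::field ^ 'n \<Rightarrow> ('a ^ 'n) set" where
  "proj_pt v = {c *s v | c. c \<noteq> 0}"

definition proj_points :: "('a::field ^ 'n) set set" where
  "proj_points = {proj_pt v | v. v \<noteq> 0}"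

definition vanishing_ideal :: "('a::field ^ 'n::finite) set set \<Rightarrow> ('a, 'n) pol set" where
  "vanishing_ideal X = {f. \<forall>d. \<forall>p\<in>X. \<forall>v\<in>p. hval d f v = 0}"

text \<open>Hilbert function HF_X(i) = dim (P/I_X)_i = dim P_i - dim (I_X)_i, and its first difference.\<close>
definition HF :: "('a::field ^ 'n::finite) set set \<Rightarrow> nat \<Rightarrow> nat" where
  "HF X i = pdim (Pd i :: ('a, 'n) pol set) - pdim (Pd i \<inter> vanishing_ideal X)"

fun dHF :: "('a::field ^ 'n::finite) set set \<Rightarrow> nat \<Rightarrow> int" where
  "dHF X 0 = int (HF X 0)"
| "dHF X (Suc i) = int (HF X (Suc i)) - int (HF X i)"

definition ideal_plus_lin :: "('a::comm_ring_1, 'n::finite) pol set \<Rightarrow> ('a, 'n) pol \<Rightarrow> ('a, 'n) pol set" where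
  "ideal_plus_lin I L = {f + L * g | f g. f \<in> I}"

text \<open>Artinian Gorenstein graded quotient P/J (J homogeneous): P/J is Artinian and its
  socle is one-dimensional (socle preimage S = {f. x_i f in J for all i}).\<close>
definition socle_pre :: "('a::comm_ring_1, 'n::finite) pol set \<Rightarrow> ('a, 'n) pol set" where
  "socle_pre J = {f. \<forall>i. var i * f \<in> J}"

definition artinian_gorenstein_quot :: "('a::field, 'n::finite) pol set \<Rightarrow> bool" where
  "artinian_gorenstein_quot J \<longleftrightarrow>
     (\<exists>d0. \<forall>d\<ge>d0. Pd d \<subseteq> J) \<and>
     (\<exists>d0. \<forall>d. pdim (Pd d \<inter> socle_pre J) = pdim (Pd d \<inter> J) + (if d = d0 then 1 else 0))"

text \<open>Arithmetically Gorenstein, via the Artinian reduction by a linear form vanishing at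
  no point of X (such a form is a non-zerodivisor on the 1-dimensional CM ring P/I_X).\<close>
definition arith_gorenstein :: "('a::field ^ 'n::finite) set set \<Rightarrow> bool" where
  "arith_gorenstein X \<longleftrightarrow> X \<subseteq> proj_points \<and>
     (\<forall>L\<in>Pd 1. (\<forall>p\<in>X. \<forall>v\<in>p. peval L v \<noteq> 0) \<longrightarrow>
        artinian_gorenstein_quot (ideal_plus_lin (vanishing_ideal X) L))"

text \<open>The module D = direct sum of Hom(P_j, F): a finitely supported functional on monomials
  (value on the monomial basis), acting on polynomials by linear extension.\<close>
definition Dmod :: "(('n \<Rightarrow>\<^sub>0 nat) \<Rightarrow> 'a::zero) set" where
  "Dmod = {\<psi>. finite {m. \<psi> m \<noteq> 0}}"

definition Dapply :: "(('n \<Rightarrow>\<^sub>0 nat) \<Rightarrow> 'a::comm_ring_1) \<Rightarrow> ('a, 'n) pol \<Rightarrow> 'a" where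
  "Dapply \<psi> g = (\<Sum>m\<in>Poly_Mapping.keys g. \<psi> m * Poly_Mapping.lookup g m)"

text \<open>Contraction: (f o psi)(g) = psi(f g), determined by its values on monomials.\<close>
definition contr :: "('a::comm_ring_1, 'n) pol \<Rightarrow> (('n \<Rightarrow>\<^sub>0 nat) \<Rightarrow> 'a) \<Rightarrow> (('n \<Rightarrow>\<^sub>0 nat) \<Rightarrow> 'a)" where
  "contr f \<psi> = (\<lambda>m. Dapply \<psi> (f * Poly_Mapping.single m 1))"

definition perp :: "('a::comm_ring_1, 'n) pol set \<Rightarrow> (('n \<Rightarrow>\<^sub>0 nat) \<Rightarrow> 'a) set" where
  "perp J = {\<psi>\<in>Dmod. \<forall>f\<in>J. contr f \<psi> = (\<lambda>_. 0)}"

definition gen_sub :: "(('n \<Rightarrow>\<^sub>0 nat) \<Rightarrow> 'a::comm_ring_1) \<Rightarrow> (('n \<Rightarrow>\<^sub>0 nat) \<Rightarrow> 'a) set" where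
  "gen_sub \<phi> = {contr f \<phi> | f. True}"

definition Dneg :: "nat \<Rightarrow> (('n::finite \<Rightarrow>\<^sub>0 nat) \<Rightarrow> 'a::zero) set" where
  "Dneg j = {\<psi>\<in>Dmod. \<forall>m. \<psi> m \<noteq> 0 \<longrightarrow> mdeg m = j}"

text \<open>Lambda_A on points and the graded automorphism lambda_A(f)(v) = f(A^{-1} v), i.e.
  the substitution x_i |-> sum_j (A^{-1})_{ij} x_j.\<close>
definition Lam_pt :: "'a::field ^ 'n ^ 'n \<Rightarrow> ('a ^ 'n) set \<Rightarrow> ('a ^ 'n) set" where
  "Lam_pt A p = (\<lambda>v. A *v v) ` p"

definition lam :: "'a::field ^ 'n::finite ^ 'n \<Rightarrow> ('a, 'n) pol \<Rightarrow> ('a, 'n) pol" where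
  "lam A f = (\<Sum>m\<in>Poly_Mapping.keys f. const (Poly_Mapping.lookup f m) *
      (\<Prod>i\<in>UNIV. (\<Sum>j\<in>UNIV. const (matrix_inv A $ i $ j) * var j) ^ Poly_Mapping.lookup m i))"

end

theory Submission
  imports Defs
begin


lemma sum_keys_superset:
  assumes "finite S" "Poly_Mapping.keys f \<subseteq> S" "\<And>m. h m 0 = 0"
  shows "(\<Sum>m\<in>Poly_Mapping.keys f. h m (Poly_Mapping.lookup f m)) = (\<Sum>m\<in>S. h m (Poly_Mapping.lookup f m))"
  by (rule sum.mono_neutral_left) (use assms in \<open>auto simp: in_keys_iff\<close>)

lemma pm_expand:
  "f = (\<Sum>m\<in>Poly_Mapping.keys f. Poly_Mapping.single m (Poly_Mapping.lookup f m))"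
  by (rule poly_mapping_eqI) (simp add: lookup_sum lookup_single when_def in_keys_iff)

lemma const_0[simp]: "const 0 = 0" by (simp add: const_def)
lemma const_1[simp]: "const 1 = 1" by (simp add: const_def)
lemma const_add: "const (a + b) = const a + const b" by (simp add: const_def single_add)
lemma const_mult: "const (a * b) = const a * const b" by (simp add: const_def mult_single)
lemma const_sum: "const (sum f I) = (\<Sum>i\<in>I. const (f i))"
  by (induction I rule: infinite_finite_induct) (auto simp: const_add)

lemma lookup_const_mult: "Poly_Mapping.lookup (const c * h) m = c * Poly_Mapping.lookup h m"
proof -
  have "const c * h = Poly_Mapping.map ((*) c) h"
    by (simp add: const_def mult_map_scale_conv_mult)
  then show ?thesis by (simp add: Poly_Mapping.map.rep_eq when_def)
qed

lemma keys_const_mult: "Poly_Mapping.keys (const c * h) \<subseteq> Poly_Mapping.keys h"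
  by (auto simp: in_keys_iff lookup_const_mult)



definition lin :: "'a::field ^ 'n::finite ^ 'n \<Rightarrow> 'n \<Rightarrow> ('a, 'n) pol" where
  "lin M i = (\<Sum>j\<in>UNIV. const (M $ i $ j) * var j)"

definition TT :: "'a::field ^ 'n::finite ^ 'n \<Rightarrow> ('n \<Rightarrow>\<^sub>0 nat) \<Rightarrow> ('a, 'n) pol" where
  "TT M k = (\<Prod>i\<in>UNIV. lin M i ^ Poly_Mapping.lookup k i)"

definition subst :: "'a::field ^ 'n::finite ^ 'n \<Rightarrow> ('a, 'n) pol \<Rightarrow> ('a, 'n) pol" where
  "subst M f = (\<Sum>m\<in>Poly_Mapping.keys f. const (Poly_Mapping.lookup f m) * TT M m)"

lemma lam_subst: "lam A f = subst (matrix_inv A) f"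
  by (simp add: lam_def subst_def TT_def lin_def)

lemma subst_superset:
  assumes "finite S" "Poly_Mapping.keys f \<subseteq> S"
  shows "subst M f = (\<Sum>m\<in>S. const (Poly_Mapping.lookup f m) * TT M m)"
  unfolding subst_def by (rule sum_keys_superset[OF assms]) simp

lemma subst_0[simp]: "subst M 0 = 0" by (simp add: subst_def)

lemma subst_add: "subst M (f + g) = subst M f + subst M g"
proof -
  let ?S = "Poly_Mapping.keys f \<union> Poly_Mapping.keys g"
  have "subst M (f + g) = (\<Sum>m\<in>?S. const (Poly_Mapping.lookup (f+g) m) * TT M m)"
    by (rule subst_superset) (auto dest: keys_add[THEN subsetD])
  also have "\<dots> = (\<Sum>m\<in>?S. const (Poly_Mapping.lookup f m) * TT M m) + (\<Sum>m\<in>?S. const (Poly_Mapping.lookup g m) * TT M m)"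
    by (simp add: lookup_add const_add distrib_right sum.distrib)
  also have "\<dots> = subst M f + subst M g"
    by (simp add: subst_superset[of ?S])
  finally show ?thesis .
qed

lemma subst_sum: "subst M (sum F I) = (\<Sum>i\<in>I. subst M (F i))"
  by (induction I rule: infinite_finite_induct) (auto simp: subst_add)

lemma subst_single: "subst M (Poly_Mapping.single k c) = const c * TT M k"
  by (cases "c = 0") (auto simp: subst_def)

lemma TT_0[simp]: "TT M 0 = 1" by (simp add: TT_def)

lemma TT_add: "TT M (a + b) = TT M a * TT M b"
  by (simp add: TT_def lookup_add power_add prod.distrib)

lemma subst_const[simp]: "subst M (const c) = const c"
  unfolding const_def by (simp add: subst_single) (simp add: const_def)

lemma subst_single_mult:
  "subst M (Poly_Mapping.single a x * Poly_Mapping.single b y) =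
   subst M (Poly_Mapping.single a x) * subst M (Poly_Mapping.single b y)"
  by (simp add: mult_single subst_single TT_add const_mult mult_ac)

lemma subst_mult: "subst M (f * g) = subst M f * subst M g"
proof -
  have "f * g = (\<Sum>a\<in>Poly_Mapping.keys f. \<Sum>b\<in>Poly_Mapping.keys g.
      Poly_Mapping.single a (Poly_Mapping.lookup f a) * Poly_Mapping.single b (Poly_Mapping.lookup g b))"
    by (subst pm_expand[of f], subst pm_expand[of g]) (simp add: sum_product)
  then have "subst M (f * g) = (\<Sum>a\<in>Poly_Mapping.keys f. \<Sum>b\<in>Poly_Mapping.keys g.
      subst M (Poly_Mapping.single a (Poly_Mapping.lookup f a)) * subst M (Poly_Mapping.single b (Poly_Mapping.lookup g b)))"
    by (simp add: subst_sum subst_single_mult)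
  also have "\<dots> = subst M (\<Sum>a\<in>Poly_Mapping.keys f. Poly_Mapping.single a (Poly_Mapping.lookup f a)) *
      subst M (\<Sum>b\<in>Poly_Mapping.keys g. Poly_Mapping.single b (Poly_Mapping.lookup g b))"
    by (simp add: subst_sum sum_product)
  also have "\<dots> = subst M f * subst M g" by (simp flip: pm_expand)
  finally show ?thesis .
qed

lemma subst_1[simp]: "subst M 1 = 1"
  using subst_const[of M 1] by simp

lemma subst_power: "subst M (p ^ n) = subst M p ^ n"
  by (induction n) (auto simp: subst_mult)

lemma subst_prod: "subst M (prod F I) = (\<Prod>i\<in>I. subst M (F i))"
  by (induction I rule: infinite_finite_induct) (auto simp: subst_mult)

lemma subst_var: "subst M (var j) = lin M j"
proof -
  have "subst M (var j) = TT M (Poly_Mapping.single j 1)"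
    by (simp add: var_def subst_single)
  also have "\<dots> = (\<Prod>i\<in>UNIV. if i = j then lin M i else 1)"
    unfolding TT_def by (rule prod.cong) (auto simp: lookup_single when_def)
  also have "\<dots> = lin M j" by simp
  finally show ?thesis .
qed

lemma subst_lin: "subst M (lin N i) = lin (N ** M) i"
proof -
  have "subst M (lin N i) = (\<Sum>j\<in>UNIV. const (N $ i $ j) * (\<Sum>l\<in>UNIV. const (M $ j $ l) * var l))"
    by (simp add: lin_def subst_sum subst_mult subst_var)
  also have "\<dots> = (\<Sum>l\<in>UNIV. \<Sum>j\<in>UNIV. const (N $ i $ j * M $ j $ l) * var l)"
    by (subst sum.swap) (simp add: sum_distrib_left const_mult mult_ac)
  also have "\<dots> = lin (N ** M) i"
    by (simp add: lin_def matrix_matrix_mult_def const_sum sum_distrib_right)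
  finally show ?thesis .
qed

lemma subst_TT: "subst M (TT N k) = TT (N ** M) k"
  by (simp add: TT_def subst_prod subst_power subst_lin)

lemma subst_subst: "subst M (subst N f) = subst (N ** M) f"
  by (simp add: subst_def[of _ f] subst_sum subst_mult subst_TT)

lemma lin_id: "lin (mat 1) i = var i"
proof -
  have "lin (mat 1) i = (\<Sum>l\<in>UNIV. if l = i then var l else 0)"
    unfolding lin_def by (rule sum.cong) (auto simp: mat_def)
  then show ?thesis by simp
qed

lemma var_power: "var i ^ n = Poly_Mapping.single (Poly_Mapping.single i n) 1"
  by (induction n) (auto simp: var_def mult_single simp flip: single_add)

lemma prod_single: "finite I \<Longrightarrow> (\<Prod>i\<in>I. Poly_Mapping.single (F i) (1::'a::comm_semiring_1)) = Poly_Mapping.single (sum F I) 1"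
  by (induction I rule: finite_induct) (auto simp: mult_single)

lemma pm_sum_single: "(\<Sum>i\<in>(UNIV::'n::finite set). Poly_Mapping.single i (Poly_Mapping.lookup k i)) = k"
  by (rule poly_mapping_eqI) (simp add: lookup_sum lookup_single when_def)

lemma TT_id: "TT (mat 1) k = Poly_Mapping.single k 1"
  by (simp add: TT_def lin_id var_power prod_single pm_sum_single)

lemma subst_id: "subst (mat 1) f = f"
proof -
  have "subst (mat 1) f = (\<Sum>m\<in>Poly_Mapping.keys f. Poly_Mapping.single m (Poly_Mapping.lookup f m))"
    by (simp add: subst_def TT_id const_def mult_single)
  then show ?thesis by (simp flip: pm_expand)
qed



lemma mdeg_add: "mdeg (a + b) = mdeg a + mdeg b"
  by (simp add: mdeg_def lookup_add sum.distrib)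

lemma mdeg_zero_iff: "mdeg (m::'n::finite \<Rightarrow>\<^sub>0 nat) = 0 \<longleftrightarrow> m = 0"
proof
  assume "mdeg m = 0"
  then have "\<forall>i. Poly_Mapping.lookup m i = 0" by (simp add: mdeg_def)
  then show "m = 0" by (intro poly_mapping_eqI) simp
qed (simp add: mdeg_def)

lemma mdeg_single: "mdeg (Poly_Mapping.single (j::'n::finite) n) = n"
proof -
  have "mdeg (Poly_Mapping.single j n) = (\<Sum>i\<in>UNIV. if i = j then n else 0)"
    unfolding mdeg_def by (rule sum.cong) (auto simp: lookup_single when_def)
  then show ?thesis by simp
qed

lemma mval_add: "mval (a + b) v = mval a v * mval b v"
  by (simp add: mval_def lookup_add power_add prod.distrib)

lemma mval_0[simp]: "mval 0 v = 1" by (simp add: mval_def)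

lemma peval_superset:
  assumes "finite S" "Poly_Mapping.keys f \<subseteq> S"
  shows "peval f v = (\<Sum>m\<in>S. Poly_Mapping.lookup f m * mval m v)"
  unfolding peval_def by (rule sum_keys_superset[OF assms]) simp

lemma peval_add: "peval (f + g) v = peval f v + peval g v"
proof -
  let ?S = "Poly_Mapping.keys f \<union> Poly_Mapping.keys g"
  have "peval (f + g) v = (\<Sum>m\<in>?S. Poly_Mapping.lookup (f+g) m * mval m v)"
    by (rule peval_superset) (auto dest: keys_add[THEN subsetD])
  also have "\<dots> = peval f v + peval g v"
    by (simp add: lookup_add distrib_right sum.distrib peval_superset[of ?S])
  finally show ?thesis .
qed

lemma peval_0[simp]: "peval 0 v = 0" by (simp add: peval_def)

lemma peval_sum: "peval (sum F I) v = (\<Sum>i\<in>I. peval (F i) v)"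
  by (induction I rule: infinite_finite_induct) (auto simp: peval_add)

lemma peval_single: "peval (Poly_Mapping.single k c) v = c * mval k v"
  by (cases "c = 0") (auto simp: peval_def)

lemma peval_mult: "peval (f * g) v = peval f v * peval g v"
proof -
  have "f * g = (\<Sum>a\<in>Poly_Mapping.keys f. \<Sum>b\<in>Poly_Mapping.keys g.
      Poly_Mapping.single a (Poly_Mapping.lookup f a) * Poly_Mapping.single b (Poly_Mapping.lookup g b))"
    by (subst pm_expand[of f], subst pm_expand[of g]) (simp add: sum_product)
  then have "peval (f * g) v = (\<Sum>a\<in>Poly_Mapping.keys f. \<Sum>b\<in>Poly_Mapping.keys g.
      peval (Poly_Mapping.single a (Poly_Mapping.lookup f a)) v * peval (Poly_Mapping.single b (Poly_Mapping.lookup g b)) v)"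
    by (simp add: peval_sum mult_single peval_single mval_add mult_ac)
  also have "\<dots> = peval (\<Sum>a\<in>Poly_Mapping.keys f. Poly_Mapping.single a (Poly_Mapping.lookup f a)) v *
      peval (\<Sum>b\<in>Poly_Mapping.keys g. Poly_Mapping.single b (Poly_Mapping.lookup g b)) v"
    by (simp add: peval_sum sum_product)
  also have "\<dots> = peval f v * peval g v" by (simp flip: pm_expand)
  finally show ?thesis .
qed

lemma peval_1[simp]: "peval 1 v = 1"
  using peval_single[of 0 1 v] by simp

lemma peval_const: "peval (const c) v = c" by (simp add: const_def peval_single)

lemma peval_power: "peval (p ^ n) v = peval p v ^ n"
  by (induction n) (auto simp: peval_mult)

lemma peval_prod: "peval (prod F I) v = (\<Prod>i\<in>I. peval (F i) v)"
  by (induction I rule: infinite_finite_induct) (auto simp: peval_mult)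

lemma peval_var: "peval (var j) (v::'a::comm_ring_1^'n::finite) = v $ j"
proof -
  have "mval (Poly_Mapping.single j 1) v = (\<Prod>i\<in>UNIV. if i = j then v $ i else 1)"
    unfolding mval_def by (rule prod.cong) (auto simp: lookup_single when_def)
  then show ?thesis by (simp add: var_def peval_single)
qed

lemma peval_lin: "peval (lin M i) v = (M *v v) $ i"
  by (simp add: lin_def peval_sum peval_mult peval_const peval_var matrix_vector_mult_def)

lemma peval_TT: "peval (TT M k) v = mval k (M *v v)"
  by (simp add: TT_def peval_prod peval_power peval_lin mval_def)

lemma homog_add: "homog d p \<Longrightarrow> homog d q \<Longrightarrow> homog d (p + q)"
  unfolding homog_def by (auto dest: keys_add[THEN subsetD])

lemma homog_mult: "homog a p \<Longrightarrow> homog b q \<Longrightarrow> homog (a + b) (p * q)"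
  unfolding homog_def by (auto dest!: keys_mult[THEN subsetD] simp: mdeg_add)

lemma homog_0[simp]: "homog d 0" by (simp add: homog_def)

lemma homog_sum: "(\<And>i. i \<in> I \<Longrightarrow> homog d (F i)) \<Longrightarrow> homog d (sum F I)"
  by (induction I rule: infinite_finite_induct) (auto intro: homog_add)

lemma homog_1: "homog 0 (1 :: ('a::zero_neq_one, 'n::finite) pol)"
  by (simp add: homog_def mdeg_def)

lemma homog_const: "homog 0 (const c :: ('a::zero, 'n::finite) pol)"
  by (simp add: homog_def mdeg_def const_def)

lemma homog_var: "homog 1 (var j :: ('a::{zero,one}, 'n::finite) pol)"
  by (simp add: homog_def var_def mdeg_single)

lemma homog_power: "homog d p \<Longrightarrow> homog (n * d) (p ^ n)"
  for p :: "('a::comm_ring_1, 'n::finite) pol"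
  by (induction n) (auto simp: homog_1 dest: homog_mult)

lemma homog_prod: "(\<And>i. i \<in> I \<Longrightarrow> homog (D i) (F i)) \<Longrightarrow> homog (sum D I) (prod F I)"
  for F :: "_ \<Rightarrow> ('a::comm_ring_1, 'n::finite) pol"
  by (induction I rule: infinite_finite_induct) (auto simp: homog_1 intro: homog_mult)

lemma homog_lin: "homog 1 (lin M i)"
  unfolding lin_def
  by (rule homog_sum) (use homog_mult[OF homog_const homog_var] in simp)

lemma homog_TT: "homog (mdeg k) (TT M k)"
proof -
  have "homog (\<Sum>i\<in>UNIV. Poly_Mapping.lookup k i * 1) (TT M k)"
    unfolding TT_def by (rule homog_prod) (rule homog_power[OF homog_lin])
  then show ?thesis by (simp add: mdeg_def)
qed

lemma hval_alt: "hval d f v = (\<Sum>m\<in>Poly_Mapping.keys f. if mdeg m = d then Poly_Mapping.lookup f m * mval m v else 0)"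
  unfolding hval_def by (simp add: sum.inter_filter)

lemma hval_homog: "homog d p \<Longrightarrow> hval e p v = (if e = d then peval p v else 0)"
  unfolding hval_alt peval_def homog_def by (auto intro: sum.cong)

lemma hval_superset:
  assumes "finite S" "Poly_Mapping.keys f \<subseteq> S"
  shows "hval d f v = (\<Sum>m\<in>S. if mdeg m = d then Poly_Mapping.lookup f m * mval m v else 0)"
  unfolding hval_alt by (rule sum_keys_superset[OF assms, where h = "\<lambda>m c. if mdeg m = d then c * mval m v else 0"]) simp

lemma hval_add: "hval d (f + g) v = hval d f v + hval d g v"
proof -
  let ?S = "Poly_Mapping.keys f \<union> Poly_Mapping.keys g"
  have "hval d (f + g) v = (\<Sum>m\<in>?S. if mdeg m = d then Poly_Mapping.lookup (f+g) m * mval m v else 0)"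
    by (rule hval_superset) (auto dest: keys_add[THEN subsetD])
  also have "\<dots> = hval d f v + hval d g v"
    by (auto simp add: hval_superset[of ?S] lookup_add distrib_right simp flip: sum.distrib intro!: sum.cong)
  finally show ?thesis .
qed

lemma hval_0[simp]: "hval d 0 v = 0" by (simp add: hval_def)

lemma hval_sum: "hval d (sum F I) v = (\<Sum>i\<in>I. hval d (F i) v)"
  by (induction I rule: infinite_finite_induct) (auto simp: hval_add)

lemma hval_subst: "hval d (subst M f) v = hval d f (M *v v)"
proof -
  have "hval d (subst M f) v = (\<Sum>m\<in>Poly_Mapping.keys f. hval d (const (Poly_Mapping.lookup f m) * TT M m) v)"
    by (simp add: subst_def hval_sum)
  also have "\<dots> = (\<Sum>m\<in>Poly_Mapping.keys f. if mdeg m = d then Poly_Mapping.lookup f m * mval m (M *v v) else 0)"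
  proof (rule sum.cong)
    fix m
    have "homog (0 + mdeg m) (const (Poly_Mapping.lookup f m) * TT M m)"
      by (rule homog_mult[OF homog_const homog_TT])
    then show "hval d (const (Poly_Mapping.lookup f m) * TT M m) v =
      (if mdeg m = d then Poly_Mapping.lookup f m * mval m (M *v v) else 0)"
      by (auto simp: hval_homog peval_mult peval_const peval_TT)
  qed simp
  also have "\<dots> = hval d f (M *v v)" by (simp add: hval_alt)
  finally show ?thesis .
qed

lemma Dapply_superset:
  assumes "finite S" "Poly_Mapping.keys f \<subseteq> S"
  shows "Dapply \<psi> f = (\<Sum>m\<in>S. \<psi> m * Poly_Mapping.lookup f m)"
  unfolding Dapply_def by (rule sum_keys_superset[OF assms]) simp

lemma Dapply_add: "Dapply \<psi> (f + g) = Dapply \<psi> f + Dapply \<psi> g"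
proof -
  let ?S = "Poly_Mapping.keys f \<union> Poly_Mapping.keys g"
  have "Dapply \<psi> (f + g) = (\<Sum>m\<in>?S. \<psi> m * Poly_Mapping.lookup (f+g) m)"
    by (rule Dapply_superset) (auto dest: keys_add[THEN subsetD])
  also have "\<dots> = Dapply \<psi> f + Dapply \<psi> g"
    by (simp add: lookup_add distrib_left sum.distrib Dapply_superset[of ?S])
  finally show ?thesis .
qed

lemma Dapply_0[simp]: "Dapply \<psi> 0 = 0" by (simp add: Dapply_def)

lemma Dapply_sum: "Dapply \<psi> (sum F I) = (\<Sum>i\<in>I. Dapply \<psi> (F i))"
  by (induction I rule: infinite_finite_induct) (auto simp: Dapply_add)

lemma Dapply_single: "Dapply \<psi> (Poly_Mapping.single k c) = \<psi> k * c"
  by (cases "c = 0") (auto simp: Dapply_def)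

lemma Dapply_const_mult: "Dapply \<psi> (const c * h) = c * Dapply \<psi> h"
proof -
  have "Dapply \<psi> (const c * h) = (\<Sum>m\<in>Poly_Mapping.keys h. \<psi> m * Poly_Mapping.lookup (const c * h) m)"
    by (rule Dapply_superset[OF finite_keys keys_const_mult])
  also have "\<dots> = (\<Sum>m\<in>Poly_Mapping.keys h. c * (\<psi> m * Poly_Mapping.lookup h m))"
    by (intro sum.cong refl) (simp only: lookup_const_mult mult.left_commute)
  finally show ?thesis by (simp add: Dapply_def sum_distrib_left)
qed

lemma Dapply_homog_other:
  assumes "\<psi> \<in> Dneg j" "homog d h" "d \<noteq> j"
  shows "Dapply \<psi> h = 0"
  unfolding Dapply_def
proof (intro sum.neutral ballI)
  fix m assume "m \<in> Poly_Mapping.keys h"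
  with assms have "\<psi> m = 0" unfolding Dneg_def homog_def by auto
  then show "\<psi> m * Poly_Mapping.lookup h m = 0" by simp
qed

lemma finite_mdeg: "finite {m::'n::finite \<Rightarrow>\<^sub>0 nat. mdeg m = d}"
proof -
  have "Poly_Mapping.lookup ` {m::'n \<Rightarrow>\<^sub>0 nat. mdeg m = d} \<subseteq> PiE UNIV (\<lambda>_. {..d})"
  proof
    fix f assume "f \<in> Poly_Mapping.lookup ` {m::'n \<Rightarrow>\<^sub>0 nat. mdeg m = d}"
    then obtain m where m: "f = Poly_Mapping.lookup m" "mdeg m = d" by blast
    have "Poly_Mapping.lookup m i \<le> mdeg m" for i
      unfolding mdeg_def by (rule member_le_sum) auto
    with m show "f \<in> PiE UNIV (\<lambda>_. {..d})" by (auto simp: PiE_def Pi_def)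
  qed
  moreover have "finite (PiE (UNIV::'n set) (\<lambda>_. {..d}))"
    by (rule finite_PiE) auto
  ultimately have "finite (Poly_Mapping.lookup ` {m::'n \<Rightarrow>\<^sub>0 nat. mdeg m = d})"
    by (rule finite_subset)
  moreover have "inj_on Poly_Mapping.lookup {m::'n \<Rightarrow>\<^sub>0 nat. mdeg m = d}"
    by (rule inj_onI, rule poly_mapping_eqI) simp
  ultimately show ?thesis
    by (rule finite_imageD)
qed


lemma Dapply_delta0: "Dapply (\<lambda>m. if m = 0 then 1 else 0) H = Poly_Mapping.lookup H 0"
proof -
  have "Dapply (\<lambda>m. if m = 0 then 1 else 0) H = (\<Sum>m\<in>Poly_Mapping.keys H. if m = 0 then Poly_Mapping.lookup H 0 else 0)"
    unfolding Dapply_def by (rule sum.cong) auto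
  also have "\<dots> = Poly_Mapping.lookup H 0" by (auto simp: in_keys_iff)
  finally show ?thesis .
qed

lemma lookup0_notin: "0 \<notin> Poly_Mapping.keys H \<Longrightarrow> Poly_Mapping.lookup H 0 = 0"
  by (simp add: in_keys_iff)

lemma mdeg_sum_zero: "mdeg (a + b) = 0 \<Longrightarrow> mdeg (a::'n::finite \<Rightarrow>\<^sub>0 nat) = 0 \<and> mdeg b = 0"
  by (simp add: mdeg_add)

lemma hval0: "hval 0 i v = Poly_Mapping.lookup i 0"
proof -
  have "hval 0 i v = (\<Sum>m\<in>Poly_Mapping.keys i. if m = 0 then Poly_Mapping.lookup i 0 else 0)"
    unfolding hval_alt by (rule sum.cong) (auto simp: mdeg_zero_iff)
  also have "\<dots> = Poly_Mapping.lookup i 0" by (auto simp: in_keys_iff)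
  finally show ?thesis .
qed

lemma single_as_const: "Poly_Mapping.single m c = const c * Poly_Mapping.single m 1"
  for c :: "'a::semiring_1"
  by (simp add: const_def mult_single)

theorem proposition9p1:
  fixes X X' :: "('a::{finite,field} ^ 'n::finite) set set"
    and L L' :: "('a, 'n) pol"
    and phi phi' :: "('n \<Rightarrow>\<^sub>0 nat) \<Rightarrow> 'a"
    and A :: "'a ^ 'n ^ 'n"
  assumes XP: "X \<subseteq> proj_points" and XP': "X' \<subseteq> proj_points"
    and AG: "arith_gorenstein X" and AG': "arith_gorenstein X'"
    and HF: "\<And>i. dHF X i = (if i = 0 \<or> i = 3 then 1 else if i = 1 \<or> i = 2 then int CARD('n) - 1 else 0)"
    and HF': "\<And>i. dHF X' i = dHF X i"
    and L: "L \<in> Pd 1" and L': "L' \<in> Pd 1"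
    and Lnv: "\<forall>p\<in>X. \<forall>v\<in>p. peval L v \<noteq> 0"
    and Lnv': "\<forall>p\<in>X'. \<forall>v\<in>p. peval L' v \<noteq> 0"
    and phi: "phi \<in> Dneg 3" and phi': "phi' \<in> Dneg 3"
    and perp: "perp (ideal_plus_lin (vanishing_ideal X) L) = gen_sub phi"
    and perp': "perp (ideal_plus_lin (vanishing_ideal X') L') = gen_sub phi'"
    and A: "invertible A"
    and AL: "lam A L = L'"
    and AX: "Lam_pt A ` X = X'"
  shows "\<exists>c. c \<noteq> 0 \<and> (\<forall>g\<in>Pd 3. Dapply phi' (lam A g) = c * Dapply phi g)"
proof -
  define Ai where "Ai = matrix_inv A"
  obtain A' where A': "A ** A' = mat 1 \<and> A' ** A = mat 1"
    using A unfolding invertible_def by blast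
  have AAi: "A ** Ai = mat 1 \<and> Ai ** A = mat 1"
    unfolding Ai_def matrix_inv_def by (rule someI[of _ A'], rule A')
  have lamS: "\<And>f. lam A f = subst Ai f" by (simp add: lam_subst Ai_def)
  define J where "J = ideal_plus_lin (vanishing_ideal X) L"
  define J' where "J' = ideal_plus_lin (vanishing_ideal X') L'"
  have VI: "subst Ai i \<in> vanishing_ideal X'" if i: "i \<in> vanishing_ideal X" for i
    unfolding vanishing_ideal_def
  proof (intro allI ballI CollectI)
    fix d p' v' assume p': "p' \<in> X'" and v': "v' \<in> p'"
    from p' AX obtain p where p: "p \<in> X" "p' = Lam_pt A p" by blast
    with v' obtain w where w: "w \<in> p" "v' = A *v w" by (auto simp: Lam_pt_def)
    have "hval d (subst Ai i) v' = hval d i (Ai *v (A *v w))" by (simp add: hval_subst w)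
    also have "\<dots> = hval d i w" by (simp add: matrix_vector_mul_assoc AAi)
    also have "\<dots> = 0" using i p w unfolding vanishing_ideal_def by blast
    finally show "hval d (subst Ai i) v' = 0" .
  qed
  have JJ: "subst Ai f \<in> J'" if f: "f \<in> J" for f
  proof -
    from f obtain i g where ig: "f = i + L * g" "i \<in> vanishing_ideal X"
      unfolding J_def ideal_plus_lin_def by blast
    have "subst Ai f = subst Ai i + L' * subst Ai g"
      using AL by (simp add: ig subst_add subst_mult lamS)
    then show ?thesis unfolding J'_def ideal_plus_lin_def using VI[OF ig(2)] by blast
  qed
  have phi'_perp: "phi' \<in> perp J'"
  proof -
    have "contr 1 phi' = phi'" by (simp add: contr_def Dapply_single)
    then have "phi' \<in> gen_sub phi'" unfolding gen_sub_def by (metis (mono_tags, lifting) mem_Collect_eq)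
    then show ?thesis using perp' by (simp add: J'_def)
  qed
  have D3: "Dapply phi' (F * G) = 0" if F: "F \<in> J'" for F G
  proof -
    have z: "Dapply phi' (F * Poly_Mapping.single m 1) = 0" for m
    proof -
      have "contr F phi' = (\<lambda>_. 0)" using phi'_perp F unfolding perp_def by blast
      then show ?thesis unfolding contr_def by (metis (mono_tags, lifting))
    qed
    have "F * G = (\<Sum>m\<in>Poly_Mapping.keys G. const (Poly_Mapping.lookup G m) * (F * Poly_Mapping.single m 1))"
      apply (subst pm_expand[of G])
      apply (subst single_as_const)
      by (simp add: sum_distrib_left mult_ac)
    then show ?thesis by (simp add: Dapply_sum Dapply_const_mult z)
  qed
  define \<psi> where "\<psi> = (\<lambda>k. Dapply phi' (TT Ai k))"
  have D1: "Dapply \<psi> h = Dapply phi' (subst Ai h)" for h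
  proof -
    have "Dapply \<psi> h = (\<Sum>m\<in>Poly_Mapping.keys h. \<psi> m * Poly_Mapping.lookup h m)"
      by (simp only: Dapply_def)
    also have "\<dots> = (\<Sum>m\<in>Poly_Mapping.keys h. Poly_Mapping.lookup h m * Dapply phi' (TT Ai m))"
      by (simp add: \<psi>_def mult.commute)
    also have "\<dots> = Dapply phi' (subst Ai h)"
      by (simp add: subst_def Dapply_sum Dapply_const_mult)
    finally show ?thesis .
  qed
  have supp: "mdeg k = 3" if "\<psi> k \<noteq> 0" for k
    using that Dapply_homog_other[OF phi' homog_TT, of k Ai] unfolding \<psi>_def by auto
  have \<psi>Dmod: "\<psi> \<in> Dmod"
    unfolding Dmod_def using finite_subset[OF _ finite_mdeg[of 3]] supp by (metis (mono_tags, lifting) mem_Collect_eq subsetI)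
  have \<psi>perp: "\<psi> \<in> perp J"
    unfolding perp_def
  proof (intro CollectI conjI ballI \<psi>Dmod)
    fix f assume f: "f \<in> J"
    show "contr f \<psi> = (\<lambda>_. 0)"
    proof
      fix m
      have "contr f \<psi> m = Dapply phi' (subst Ai f * subst Ai (Poly_Mapping.single m 1))"
        by (simp add: contr_def D1 subst_mult)
      also have "\<dots> = 0" by (rule D3[OF JJ[OF f]])
      finally show "contr f \<psi> m = 0" .
    qed
  qed
  then obtain f0 where f0: "\<psi> = contr f0 phi"
    using perp unfolding J_def gen_sub_def by blast
  define c where "c = Poly_Mapping.lookup f0 0"
  have E: "\<psi> k = phi k * c" if k: "mdeg k = 3" for k
  proof -
    have "f0 * Poly_Mapping.single k 1 = (\<Sum>a\<in>Poly_Mapping.keys f0. Poly_Mapping.single (a + k) (Poly_Mapping.lookup f0 a))"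
      by (subst pm_expand[of f0]) (simp add: sum_distrib_right mult_single)
    then have "\<psi> k = (\<Sum>a\<in>Poly_Mapping.keys f0. phi (a + k) * Poly_Mapping.lookup f0 a)"
      by (simp add: f0 contr_def Dapply_sum Dapply_single)
    also have "\<dots> = (\<Sum>a\<in>Poly_Mapping.keys f0. if a = 0 then phi k * c else 0)"
    proof (rule sum.cong)
      fix a assume "a \<in> Poly_Mapping.keys f0"
      show "phi (a + k) * Poly_Mapping.lookup f0 a = (if a = 0 then phi k * c else 0)"
      proof (cases "a = 0")
        case False
        then have "mdeg a \<noteq> 0" by (simp add: mdeg_zero_iff)
        then have "mdeg (a + k) \<noteq> 3" using k by (simp add: mdeg_add)
        then have "phi (a + k) = 0" using phi unfolding Dneg_def by blast
        then show ?thesis using False by simp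
      qed (simp add: c_def)
    qed simp
    also have "\<dots> = phi k * c" by (auto simp: c_def in_keys_iff)
    finally show ?thesis .
  qed
  have main: "Dapply phi' (lam A g) = c * Dapply phi g" if g: "g \<in> Pd 3" for g
  proof -
    have "Dapply phi' (lam A g) = Dapply \<psi> g" by (simp add: D1 lamS)
    also have "\<dots> = (\<Sum>m\<in>Poly_Mapping.keys g. c * (phi m * Poly_Mapping.lookup g m))"
      unfolding Dapply_def
    proof (rule sum.cong)
      fix m assume "m \<in> Poly_Mapping.keys g"
      then have "mdeg m = 3" using g unfolding Pd_def homog_def by blast
      then show "\<psi> m * Poly_Mapping.lookup g m = c * (phi m * Poly_Mapping.lookup g m)"
        by (simp add: E)
    qed simp
    also have "\<dots> = c * Dapply phi g" by (simp add: Dapply_def sum_distrib_left)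
    finally show ?thesis .
  qed
  have "c \<noteq> 0"
  proof
    assume c0: "c = 0"
    have \<psi>0: "\<psi> k = 0" for k
      using E supp c0 by (cases "mdeg k = 3") auto
    have "phi' k = 0" for k
    proof -
      have "subst Ai (subst A (Poly_Mapping.single k 1)) = Poly_Mapping.single k 1"
        by (simp add: subst_subst AAi subst_id)
      then have "phi' k = Dapply phi' (subst Ai (subst A (Poly_Mapping.single k 1)))"
        by (simp add: Dapply_single)
      also have "\<dots> = Dapply \<psi> (subst A (Poly_Mapping.single k 1))" by (rule D1[symmetric])
      also have "\<dots> = 0" unfolding Dapply_def \<psi>0 by simp
      finally show ?thesis .
    qed
    then have phi'0: "phi' = (\<lambda>_. 0)" by auto
    have gs0: "gen_sub phi' = {\<lambda>_. 0}"
      unfolding gen_sub_def phi'0 contr_def Dapply_def by auto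
    have "X' \<noteq> {}"
    proof
      assume "X' = {}"
      then have "vanishing_ideal X' = UNIV" by (simp add: vanishing_ideal_def)
      then have "HF X' 0 = 0" by (simp add: HF_def)
      then show False using HF'[of 0] HF[of 0] by simp
    qed
    then obtain p where p: "p \<in> X'" by blast
    with XP' obtain v where v: "p = proj_pt v" "v \<noteq> 0" unfolding proj_points_def by blast
    have vp: "v \<in> p" unfolding v proj_pt_def by (rule CollectI, rule exI[of _ 1]) simp
    have Z0: "Poly_Mapping.lookup F 0 = 0" if F: "F \<in> J'" for F
    proof -
      from F obtain i g where ig: "F = i + L' * g" "i \<in> vanishing_ideal X'"
        unfolding J'_def ideal_plus_lin_def by blast
      have "hval 0 i v = 0" using ig(2) p vp unfolding vanishing_ideal_def by blast
      then have i0: "Poly_Mapping.lookup i 0 = 0" by (simp add: hval0)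
      have "0 \<notin> Poly_Mapping.keys (L' * g)"
      proof
        assume "0 \<in> Poly_Mapping.keys (L' * g)"
        then obtain a b where ab: "0 = a + b" "a \<in> Poly_Mapping.keys L'"
          using keys_mult by blast
        then have "mdeg a = 1" using L' unfolding Pd_def homog_def by blast
        moreover have "mdeg (a + b) = 0" using ab by (simp add: mdeg_def)
        ultimately show False by (simp add: mdeg_add)
      qed
      then show ?thesis by (simp add: ig lookup_add i0 lookup0_notin)
    qed
    define \<delta> where "\<delta> = (\<lambda>m::'n \<Rightarrow>\<^sub>0 nat. if m = 0 then (1::'a) else 0)"
    have "\<delta> \<in> perp J'"
      unfolding perp_def
    proof (intro CollectI conjI ballI)
      show "\<delta> \<in> Dmod" unfolding Dmod_def \<delta>_def by simp
      fix F assume F: "F \<in> J'"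
      show "contr F \<delta> = (\<lambda>_. 0)"
      proof
        fix m
        have "Poly_Mapping.lookup (F * Poly_Mapping.single m 1) 0 = 0"
        proof (cases "m = 0")
          case True
          then show ?thesis using Z0[OF F] by simp
        next
          case False
          have "0 \<notin> Poly_Mapping.keys (F * Poly_Mapping.single m 1)"
          proof
            assume "0 \<in> Poly_Mapping.keys (F * Poly_Mapping.single m 1)"
            then obtain a b where ab: "0 = a + b" "b \<in> Poly_Mapping.keys (Poly_Mapping.single m (1::'a))"
              using keys_mult by blast
            then have "b = m" by (simp split: if_splits)
            moreover have "mdeg (a + b) = 0" using ab by (simp add: mdeg_def)
            ultimately have "mdeg m = 0" by (simp add: mdeg_add)
            then show False using False by (simp add: mdeg_zero_iff)
          qed
          then show ?thesis by (rule lookup0_notin)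
        qed
        then show "contr F \<delta> m = 0" unfolding contr_def \<delta>_def Dapply_delta0 .
      qed
    qed
    then have "\<delta> = (\<lambda>_. 0)" using perp' gs0 by (simp add: J'_def)
    then show False unfolding \<delta>_def by (metis one_neq_zero)
  qed
  then show ?thesis using main by blast
qed

end
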